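(* Under the assumptions and notation of the theorem below, suppose in addition that \[\min_{\{j:\,\beta_{\star,j}\neq0\}}|\beta_{\star,j}|>\sqrt{\frac{M\sigma_\star^2 s\log p}{n}}.\] Then with probability at least $1-p^{-c_0 s/8}-e^{-s}-p^{-(c_0/2-1)}$, one has $\operatorname{sign}(\tilde\beta_n)=\operatorname{sign}(\beta_\star)$. The assumptions and notation are as follows. Let $Y=X\beta_\star+\epsilon$ with $\epsilon\sim N(0,\sigma_\star^2 I_n)$, where $\sigma_\star^2>0$ is known. Let $X\in\mathbb R^{n\times p}$ have nonzero, pairwise orthogonal columns $x_1,\dots,x_p$. Let $s=|\{j:\beta_{\star,j}\neq0\}|$ with $\log s\ge1$. Fix $c_0>2$ and set $z_\star=c_0\log p$. Let $c=\min_j\|x_j\|^2/n$, $M=4(2+c_0)/c$, and let $\tilde\beta_n$ be the thresholded SBL estimator defined in the context.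
   Context: For $u\in\mathbb R^p$, $\operatorname{sign}(u)=(s_1,\dots,s_p)$ with $s_i=0$ if $u_i=0$, $s_i=1$ if $u_i>0$, and $s_i=-1$ if $u_i<0$. Set $\sigma^2=\sigma_\star^2$. For $\gamma\in[0,\infty)^p$ let $I_\gamma=\{j:\gamma_j\neq0\}$, and define $C_\gamma=\sigma^2 I_n+\sum_{j\in I_\gamma}\gamma_jx_jx_j'$ and $\ell(\sigma^2,\gamma)=-\tfrac12\log\det C_\gamma-\tfrac12\operatorname{Tr}(C_\gamma^{-1}YY')$. Let $\hat\gamma_n$ maximize $\gamma\mapsto\ell(\sigma^2,\gamma)$ on $[0,\infty)^p$. Under orthogonality, $\hat\gamma_{n,j}=(\langle x_j,Y\rangle^2-\sigma^2\|x_j\|^2)/\|x_j\|^4$ if $\langle x_j,Y\rangle^2>\sigma^2\|x_j\|^2$, and $0$ otherwise. Threshold: $\tilde\gamma_{n,j}=\hat\gamma_{n,j}$ if $\hat\gamma_{n,j}>\sigma^2z_\star/\|x_j\|^2$, and $0$ otherwise. Estimator: $\tilde\beta_{n,j}=0$ for $j\notin I_{\tilde\gamma_n}$, and $(\tilde\beta_{n,j})_{j\in I_{\tilde\gamma_n}}=(X_{\tilde\gamma_n}'X_{\tilde\gamma_n}+\sigma^2\bar\Gamma_{\tilde\gamma_n}^{-1})^{-1}X_{\tilde\gamma_n}'Y$. Here $X_\gamma$ collects the columns indexed by $I_\gamma$, and $\bar\Gamma_\gamma=\operatorname{diag}(\gamma_j,j\in I_\gamma)$. *)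

theory Defs
  imports "HOL-Probability.Probability" "Jordan_Normal_Form.Gauss_Jordan_Elimination"
begin

definition ipv :: "real Matrix.vec \<Rightarrow> real Matrix.vec \<Rightarrow> real" where
  "ipv u v = (\<Sum>i<dim_vec u. u $ i * v $ i)"

definition sqnorm :: "real Matrix.vec \<Rightarrow> real" where
  "sqnorm u = ipv u u"

definition sign_vec :: "real Matrix.vec \<Rightarrow> real Matrix.vec" where
  "sign_vec u = map_vec sgn u"

text \<open>Closed form of the SBL maximiser hat gamma_n under orthogonal design.\<close>
definition gamma_hat :: "real \<Rightarrow> real mat \<Rightarrow> real Matrix.vec \<Rightarrow> nat \<Rightarrow> real" where
  "gamma_hat \<sigma>2 X Y j =
     (let a = (ipv (col X j) Y)\<^sup>2; q = sqnorm (col X j) in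
      if a > \<sigma>2 * q then (a - \<sigma>2 * q) / q\<^sup>2 else 0)"

definition gamma_tilde :: "real \<Rightarrow> real \<Rightarrow> real mat \<Rightarrow> real Matrix.vec \<Rightarrow> nat \<Rightarrow> real" where
  "gamma_tilde \<sigma>2 z X Y j =
     (let g = gamma_hat \<sigma>2 X Y j in
      if g > \<sigma>2 * z / sqnorm (col X j) then g else 0)"

definition sbl_estimator :: "real \<Rightarrow> real \<Rightarrow> real mat \<Rightarrow> real Matrix.vec \<Rightarrow> real Matrix.vec" where
  "sbl_estimator \<sigma>2 z X Y =
     (let \<gamma> = gamma_tilde \<sigma>2 z X Y;
          I = {j. j < dim_col X \<and> \<gamma> j \<noteq> 0};
          idx = sorted_list_of_set I;
          k = length idx;
          Xg = mat (dim_row X) k (\<lambda>(i, l). X $$ (i, idx ! l));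
          Gbar = mat k k (\<lambda>(l, m). if l = m then \<gamma> (idx ! l) else 0);
          A = transpose_mat Xg * Xg + \<sigma>2 \<cdot>\<^sub>m the (mat_inverse Gbar);
          b = the (mat_inverse A) *\<^sub>v (transpose_mat Xg *\<^sub>v Y)
      in Matrix.vec (dim_col X) (\<lambda>j. if j \<in> I then b $ card {i \<in> I. i < j} else 0))"

definition noise_measure :: "nat \<Rightarrow> real \<Rightarrow> (nat \<Rightarrow> real) measure" where
  "noise_measure n \<sigma>2 = PiM {..<n} (\<lambda>_. density lborel (normal_density 0 (sqrt \<sigma>2)))"

end

theory Submission
  imports Defs "HOL-Real_Asymp.Real_Asymp"
begin


definition diagm :: "nat \<Rightarrow> (nat \<Rightarrow> real) \<Rightarrow> real mat" where
  "diagm k d = mat k k (\<lambda>(l, m). if l = m then d l else 0)"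

lemma diagm_carrier[simp]: "diagm k d \<in> carrier_mat k k"
  by (simp add: diagm_def)

lemma diagm_dims[simp]: "dim_row (diagm k d) = k" "dim_col (diagm k d) = k"
  by (simp_all add: diagm_def)

lemma diagm_mult: "diagm k d * diagm k e = diagm k (\<lambda>l. d l * e l)"
proof (rule eq_matI)
  fix i j assume ij: "i < dim_row (diagm k (\<lambda>l. d l * e l))" "j < dim_col (diagm k (\<lambda>l. d l * e l))"
  have "(diagm k d * diagm k e) $$ (i, j) = (\<Sum>m\<in>{0..<k}. (if i = m then d i else 0) * (if m = j then e m else 0))"
    using ij by (simp add: scalar_prod_def diagm_def)
  also have "\<dots> = (\<Sum>m\<in>{0..<k}. if m = i then (if i = j then d i * e i else 0) else 0)"
    by (rule sum.cong) auto
  also have "\<dots> = (if i = j then d i * e i else 0)" using ij by simp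
  finally show "(diagm k d * diagm k e) $$ (i, j) = diagm k (\<lambda>l. d l * e l) $$ (i, j)"
    using ij by (simp add: diagm_def)
qed auto

lemma diagm_one: "diagm k (\<lambda>_. 1) = 1\<^sub>m k"
  by (rule eq_matI) (auto simp: diagm_def)

lemma diagm_inv: assumes "\<And>l. l < k \<Longrightarrow> d l \<noteq> 0"
  shows "mat_inverse (diagm k d) = Some (diagm k (\<lambda>l. 1 / d l))"
proof -
  let ?A = "diagm k d" and ?B = "diagm k (\<lambda>l. 1 / d l)"
  have AB: "?A * ?B = 1\<^sub>m k" unfolding diagm_mult diagm_one[symmetric]
    by (rule eq_matI) (auto simp: diagm_def assms)
  have BA: "?B * ?A = 1\<^sub>m k" unfolding diagm_mult diagm_one[symmetric]
    by (rule eq_matI) (auto simp: diagm_def assms)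
  show ?thesis
  proof (cases "mat_inverse ?A")
    case None
    from mat_inverse(1)[OF diagm_carrier None, of undefined] AB BA show ?thesis
      by (auto simp: Units_def ring_mat_def)
  next
    case (Some C)
    from mat_inverse(2)[OF diagm_carrier Some] have C: "?A * C = 1\<^sub>m k" "C \<in> carrier_mat k k" by auto
    have "C = (?B * ?A) * C" using BA C by simp
    also have "\<dots> = ?B * (?A * C)" using C by (simp add: assoc_mult_mat[of _ k k _ k _ k])
    also have "\<dots> = ?B" using C by simp
    finally show ?thesis using Some by simp
  qed
qed

lemma sorted_list_nth_card:
  fixes I :: "nat set"
  assumes "finite I" "j \<in> I"
  shows "card {i \<in> I. i < j} < card I \<and> sorted_list_of_set I ! card {i \<in> I. i < j} = j"
proof -
  define xs where "xs = sorted_list_of_set I"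
  have sw: "sorted_wrt (<) xs" and set: "set xs = I" and dist: "distinct xs"
    using assms by (auto simp: xs_def)
  have len: "length xs = card I" using assms by (simp add: xs_def)
  obtain l where l: "l < length xs" "xs ! l = j" using assms set by (metis in_set_conv_nth)
  have eq: "{i \<in> I. i < j} = (\<lambda>m. xs ! m) ` {..<l}"
  proof
    show "{i \<in> I. i < j} \<subseteq> (\<lambda>m. xs ! m) ` {..<l}"
    proof
      fix i assume i: "i \<in> {i \<in> I. i < j}"
      then obtain m where m: "m < length xs" "xs ! m = i" using set by (metis (mono_tags, lifting) in_set_conv_nth mem_Collect_eq)
      have "m < l"
      proof (rule ccontr)
        assume "\<not> m < l"
        then have "l \<le> m" by simp
        then have "xs ! l \<le> xs ! m" using sw m l
          by (metis le_less sorted_wrt_nth_less order.refl)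
        then show False using i m l by simp
      qed
      then show "i \<in> (\<lambda>m. xs ! m) ` {..<l}" using m by auto
    qed
  next
    show "(\<lambda>m. xs ! m) ` {..<l} \<subseteq> {i \<in> I. i < j}"
      using sw l set by (auto intro: sorted_wrt_nth_less)
  qed
  have "card {i \<in> I. i < j} = l"
    unfolding eq using dist l by (subst card_image) (auto simp: inj_on_def nth_eq_iff_index_eq)
  then show ?thesis using l len xs_def by simp
qed

lemma ipv_col: "X \<in> carrier_mat n p \<Longrightarrow> j < p \<Longrightarrow> ipv (col X j) v = (\<Sum>i<n. X $$ (i, j) * v $ i)"
  by (simp add: ipv_def)

lemma sqnorm_col_pos:
  assumes X: "X \<in> carrier_mat n p" and j: "j < p" and nz: "col X j \<noteq> 0\<^sub>v n"
  shows "sqnorm (col X j) > 0"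
proof -
  have ge: "sqnorm (col X j) = (\<Sum>i<n. (X $$ (i, j))\<^sup>2)"
    using X j by (simp add: sqnorm_def ipv_col power2_eq_square)
  obtain i where i: "i < n" "X $$ (i, j) \<noteq> 0"
  proof (rule ccontr)
    assume "\<not> thesis"
    then have "\<forall>i<n. X $$ (i, j) = 0" using that by blast
    then have "col X j = 0\<^sub>v n" using X j by (intro eq_vecI) auto
    then show False using nz by simp
  qed
  have "0 < (X $$ (i, j))\<^sup>2" using i by simp
  also have "\<dots> \<le> (\<Sum>i<n. (X $$ (i, j))\<^sup>2)"
    using i by (intro member_le_sum) auto
  finally show ?thesis using ge by simp
qed

lemma gamma_hat_nonneg: "sqnorm (col X j) > 0 \<Longrightarrow> \<sigma>2 > 0 \<Longrightarrow> gamma_hat \<sigma>2 X Y j \<ge> 0"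
  by (auto simp: gamma_hat_def Let_def)

lemma gamma_tilde_nonneg: "sqnorm (col X j) > 0 \<Longrightarrow> \<sigma>2 > 0 \<Longrightarrow> gamma_tilde \<sigma>2 z X Y j \<ge> 0"
  using gamma_hat_nonneg[of X j \<sigma>2 Y] by (auto simp: gamma_tilde_def Let_def)

lemma gamma_tilde_ne0_iff:
  assumes "sqnorm (col X j) > 0" "\<sigma>2 > 0"
  shows "gamma_tilde \<sigma>2 z X Y j \<noteq> 0 \<longleftrightarrow>
    (\<sigma>2 * sqnorm (col X j) < (ipv (col X j) Y)\<^sup>2 \<and>
     \<sigma>2 * z / sqnorm (col X j) < ((ipv (col X j) Y)\<^sup>2 - \<sigma>2 * sqnorm (col X j)) / (sqnorm (col X j))\<^sup>2)"
  using assms by (auto simp: gamma_tilde_def gamma_hat_def Let_def)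

lemma sbl_formula:
  assumes X: "X \<in> carrier_mat n p" and Y: "Y \<in> carrier_vec n" and sig: "\<sigma>2 > 0"
    and nz: "\<forall>j<p. col X j \<noteq> 0\<^sub>v n"
    and orth: "\<forall>j<p. \<forall>k<p. j \<noteq> k \<longrightarrow> ipv (col X j) (col X k) = 0"
  shows "sbl_estimator \<sigma>2 z X Y = Matrix.vec p (\<lambda>j. if gamma_tilde \<sigma>2 z X Y j \<noteq> 0
     then ipv (col X j) Y / (sqnorm (col X j) + \<sigma>2 / gamma_tilde \<sigma>2 z X Y j) else 0)"
proof -
  define \<gamma> where "\<gamma> = gamma_tilde \<sigma>2 z X Y"
  define I where "I = {j. j < dim_col X \<and> \<gamma> j \<noteq> 0}"
  define idx where "idx = sorted_list_of_set I"
  define k where "k = length idx"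
  define Xg where "Xg = mat (dim_row X) k (\<lambda>(i, l). X $$ (i, idx ! l))"
  define Gbar where "Gbar = mat k k (\<lambda>(l, m). if l = m then \<gamma> (idx ! l) else 0)"
  define A where "A = transpose_mat Xg * Xg + \<sigma>2 \<cdot>\<^sub>m the (mat_inverse Gbar)"
  define b where "b = the (mat_inverse A) *\<^sub>v (transpose_mat Xg *\<^sub>v Y)"
  have est: "sbl_estimator \<sigma>2 z X Y = Matrix.vec (dim_col X) (\<lambda>j. if j \<in> I then b $ card {i \<in> I. i < j} else 0)"
    unfolding sbl_estimator_def Let_def b_def A_def Gbar_def Xg_def k_def idx_def I_def \<gamma>_def ..
  have dims: "dim_row X = n" "dim_col X = p" using X by auto
  have q: "\<And>j. j < p \<Longrightarrow> sqnorm (col X j) > 0" using sqnorm_col_pos[OF X] nz by auto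
  have finI: "finite I" unfolding I_def by simp
  have setidx: "set idx = I" and distidx: "distinct idx" using finI by (auto simp: idx_def)
  have idx_in: "\<And>l. l < k \<Longrightarrow> idx ! l \<in> I" using setidx k_def by auto
  have idx_p: "\<And>l. l < k \<Longrightarrow> idx ! l < p" using idx_in dims by (auto simp: I_def)
  have gpos: "\<And>l. l < k \<Longrightarrow> \<gamma> (idx ! l) > 0"
  proof -
    fix l assume l: "l < k"
    have "\<gamma> (idx ! l) \<ge> 0" unfolding \<gamma>_def using gamma_tilde_nonneg[OF q[OF idx_p[OF l]] sig] .
    moreover have "\<gamma> (idx ! l) \<noteq> 0" using idx_in[OF l] by (auto simp: I_def)
    ultimately show "\<gamma> (idx ! l) > 0" by simp
  qed
  have G: "Gbar = diagm k (\<lambda>l. \<gamma> (idx ! l))" by (simp add: Gbar_def diagm_def)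
  have Ginv: "the (mat_inverse Gbar) = diagm k (\<lambda>l. 1 / \<gamma> (idx ! l))"
    unfolding G using gpos by (subst diagm_inv) (auto dest: gpos)
  have XtX: "transpose_mat Xg * Xg = diagm k (\<lambda>l. sqnorm (col X (idx ! l)))"
  proof (rule eq_matI)
    fix l m assume lm: "l < dim_row (diagm k (\<lambda>l. sqnorm (col X (idx ! l))))"
       "m < dim_col (diagm k (\<lambda>l. sqnorm (col X (idx ! l))))"
    then have lm': "l < k" "m < k" by auto
    have "(transpose_mat Xg * Xg) $$ (l, m) = ipv (col X (idx ! l)) (col X (idx ! m))"
      using lm' dims idx_p[OF lm'(1)] idx_p[OF lm'(2)]
      by (simp add: Xg_def scalar_prod_def ipv_def atLeast0LessThan)
    also have "\<dots> = (if l = m then sqnorm (col X (idx ! l)) else 0)"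
      using orth idx_p[OF lm'(1)] idx_p[OF lm'(2)] distidx lm' k_def
      by (auto simp: sqnorm_def nth_eq_iff_index_eq)
    finally show "(transpose_mat Xg * Xg) $$ (l, m) = diagm k (\<lambda>l. sqnorm (col X (idx ! l))) $$ (l, m)"
      using lm' by (simp add: diagm_def)
  qed (auto simp: Xg_def)
  define d where "d = (\<lambda>l. sqnorm (col X (idx ! l)) + \<sigma>2 / \<gamma> (idx ! l))"
  have dpos: "\<And>l. l < k \<Longrightarrow> d l > 0"
    unfolding d_def using q idx_p gpos sig by (meson add_pos_pos divide_pos_pos)
  have Aeq: "A = diagm k d"
    unfolding A_def XtX Ginv by (rule eq_matI) (auto simp: diagm_def d_def)
  have Ainv: "the (mat_inverse A) = diagm k (\<lambda>l. 1 / d l)"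
    unfolding Aeq by (subst diagm_inv) (auto dest: dpos)
  have XtY: "\<And>l. l < k \<Longrightarrow> (transpose_mat Xg *\<^sub>v Y) $ l = ipv (col X (idx ! l)) Y"
    using dims Y idx_p by (simp add: Xg_def scalar_prod_def ipv_def atLeast0LessThan)
  have bl: "\<And>l. l < k \<Longrightarrow> b $ l = ipv (col X (idx ! l)) Y / d l"
  proof -
    fix l assume l: "l < k"
    have "b $ l = (\<Sum>m\<in>{0..<k}. (if l = m then 1 / d l else 0) * (transpose_mat Xg *\<^sub>v Y) $ m)"
      unfolding b_def Ainv using l by (simp add: diagm_def scalar_prod_def Xg_def)
    also have "\<dots> = (\<Sum>m\<in>{0..<k}. if m = l then (transpose_mat Xg *\<^sub>v Y) $ l / d l else 0)"
      by (rule sum.cong) auto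
    also have "\<dots> = ipv (col X (idx ! l)) Y / d l" using l XtY by simp
    finally show "b $ l = ipv (col X (idx ! l)) Y / d l" .
  qed
  show ?thesis
  proof (rule eq_vecI)
    fix j assume "j < dim_vec (Matrix.vec p (\<lambda>j. if gamma_tilde \<sigma>2 z X Y j \<noteq> 0
     then ipv (col X j) Y / (sqnorm (col X j) + \<sigma>2 / gamma_tilde \<sigma>2 z X Y j) else 0))"
    then have j: "j < p" by simp
    show "sbl_estimator \<sigma>2 z X Y $ j = Matrix.vec p (\<lambda>j. if gamma_tilde \<sigma>2 z X Y j \<noteq> 0
     then ipv (col X j) Y / (sqnorm (col X j) + \<sigma>2 / gamma_tilde \<sigma>2 z X Y j) else 0) $ j"
    proof (cases "j \<in> I")
      case True
      have kI: "k = card I" using finI by (simp add: k_def idx_def)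
      from sorted_list_nth_card[OF finI True] have c: "card {i \<in> I. i < j} < k" "idx ! card {i \<in> I. i < j} = j"
        by (simp_all add: kI idx_def)
      show ?thesis using True j est dims bl[OF c(1)] c(2)
        by (simp add: I_def d_def \<gamma>_def)
    next
      case False
      then show ?thesis using j est dims by (simp add: I_def \<gamma>_def)
    qed
  qed (simp add: est dims)
qed

lemma indep_coord:
  assumes N: "prob_space N" "sets N = sets borel" and I: "I \<noteq> {}"
  shows "prob_space.indep_vars (PiM I (\<lambda>_. N)) (\<lambda>_. borel) (\<lambda>i \<omega>. \<omega> i) I"
proof -
  interpret P: prob_space "PiM I (\<lambda>_. N)" using N by (intro prob_space_PiM) auto
  have rv: "\<And>i. i \<in> I \<Longrightarrow> (\<lambda>\<omega>. \<omega> i) \<in> measurable (PiM I (\<lambda>_. N)) borel"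
  proof -
    fix i assume "i \<in> I"
    then have "(\<lambda>\<omega>. \<omega> i) \<in> measurable (PiM I (\<lambda>_. N)) N" by simp
    then show "(\<lambda>\<omega>. \<omega> i) \<in> measurable (PiM I (\<lambda>_. N)) borel"
      unfolding measurable_cong_sets[OF refl N(2), symmetric] .
  qed
  show ?thesis
  proof (subst P.indep_vars_iff_distr_eq_PiM'[OF I])
    show "\<And>i. i \<in> I \<Longrightarrow> (\<lambda>\<omega>. \<omega> i) \<in> measurable (PiM I (\<lambda>_. N)) borel" using rv by simp
    have "distr (PiM I (\<lambda>_. N)) (PiM I (\<lambda>_. borel)) (\<lambda>x. \<lambda>i\<in>I. x i)
        = distr (PiM I (\<lambda>_. N)) (PiM I (\<lambda>_. borel)) (\<lambda>x. x)"
      by (rule distr_cong) (auto simp: space_PiM PiE_def extensional_restrict)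
    also have "\<dots> = PiM I (\<lambda>_. N)"
      by (rule distr_id2) (intro sets_PiM_cong, auto simp: N(2))
    also have "\<dots> = PiM I (\<lambda>i. distr (PiM I (\<lambda>_. N)) borel (\<lambda>\<omega>. \<omega> i))"
    proof (rule PiM_cong[OF refl])
      fix i assume i: "i \<in> I"
      have "distr (PiM I (\<lambda>_. N)) borel (\<lambda>\<omega>. \<omega> i) = distr (PiM I (\<lambda>_. N)) N (\<lambda>\<omega>. \<omega> i)"
        by (rule distr_cong) (auto simp: N(2))
      also have "\<dots> = N" using N i by (intro distr_PiM_component) auto
      finally show "N = distr (PiM I (\<lambda>_. N)) borel (\<lambda>\<omega>. \<omega> i)" by simp
    qed
    finally show "distr (PiM I (\<lambda>_. N)) (PiM I (\<lambda>_. borel)) (\<lambda>x. \<lambda>i\<in>I. x i) =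
        PiM I (\<lambda>i. distr (PiM I (\<lambda>_. N)) borel (\<lambda>\<omega>. \<omega> i))" .
  qed
qed

lemma coord_distributed:
  assumes sig: "\<sigma> > 0" and i: "i \<in> I"
  shows "distributed (PiM I (\<lambda>_. density lborel (normal_density 0 \<sigma>))) lborel (\<lambda>\<omega>. \<omega> i) (normal_density 0 \<sigma>)"
proof -
  let ?N = "density lborel (\<lambda>x. ennreal (normal_density 0 \<sigma> x))"
  have N: "prob_space ?N" using sig by (rule prob_space_normal_density)
  have "distr (PiM I (\<lambda>_. ?N)) lborel (\<lambda>\<omega>. \<omega> i) = distr (PiM I (\<lambda>_. ?N)) ?N (\<lambda>\<omega>. \<omega> i)"
    by (rule distr_cong) auto
  also have "\<dots> = ?N" using N i by (intro distr_PiM_component) auto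
  moreover have "(\<lambda>\<omega>. \<omega> i) \<in> measurable (PiM I (\<lambda>_. ?N)) ?N" using i by simp
  then have "(\<lambda>\<omega>. \<omega> i) \<in> measurable (PiM I (\<lambda>_. ?N)) lborel"
    unfolding measurable_cong_sets[OF refl sets_density[of lborel], symmetric] by simp
  ultimately show ?thesis unfolding distributed_def by simp
qed

lemma lincomb_distributed:
  fixes n :: nat and a :: "nat \<Rightarrow> real"
  assumes sig: "\<sigma> > 0" and nz: "\<exists>i<n. a i \<noteq> 0"
  shows "distributed (PiM {..<n} (\<lambda>_. density lborel (normal_density 0 \<sigma>))) lborel
     (\<lambda>\<omega>. \<Sum>i<n. a i * \<omega> i) (normal_density 0 (\<sigma> * sqrt (\<Sum>i<n. (a i)\<^sup>2)))"
proof -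
  let ?N = "density lborel (\<lambda>x. ennreal (normal_density 0 \<sigma> x))"
  let ?P = "PiM {..<n} (\<lambda>_. ?N)"
  have N: "prob_space ?N" using sig by (rule prob_space_normal_density)
  interpret P: prob_space ?P using N by (intro prob_space_PiM) auto
  define J where "J = {i. i < n \<and> a i \<noteq> 0}"
  have J: "finite J" "J \<noteq> {}" "J \<subseteq> {..<n}"
  proof -
    show "J \<subseteq> {..<n}" by (auto simp: J_def)
    then show "finite J" by (rule finite_subset) simp
    show "J \<noteq> {}" using nz by (auto simp: J_def)
  qed
  have ind0: "P.indep_vars (\<lambda>_. borel) (\<lambda>i \<omega>. \<omega> i) {..<n}"
    using nz by (intro indep_coord[OF N]) auto
  have ind1: "P.indep_vars (\<lambda>_. borel) (\<lambda>i \<omega>. a i * \<omega> i) {..<n}"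
    using P.indep_vars_compose2[OF ind0, of "\<lambda>i x. a i * x" "\<lambda>_. borel"] by simp
  have ind: "P.indep_vars (\<lambda>_. borel) (\<lambda>i \<omega>. a i * \<omega> i) J"
    using P.indep_vars_subset[OF ind1 J(3)] .
  have dist: "distributed ?P lborel (\<lambda>\<omega>. a i * \<omega> i) (normal_density 0 (\<bar>a i\<bar> * \<sigma>))" if i: "i \<in> J" for i
  proof -
    have "i \<in> {..<n}" "a i \<noteq> 0" using i by (auto simp: J_def)
    from P.normal_density_affine[OF coord_distributed[OF sig this(1)] sig this(2), of 0]
    show ?thesis by simp
  qed
  have pos: "\<And>i. i \<in> J \<Longrightarrow> 0 < \<bar>a i\<bar> * \<sigma>" using sig by (auto simp: J_def)
  from P.sum_indep_normal[OF J(1,2) ind pos dist]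
  have D: "distributed ?P lborel (\<lambda>\<omega>. \<Sum>i\<in>J. a i * \<omega> i) (normal_density 0 (sqrt (\<Sum>i\<in>J. (\<bar>a i\<bar> * \<sigma>)\<^sup>2)))"
    by simp
  have e1: "(\<lambda>\<omega>. \<Sum>i\<in>J. a i * \<omega> i) = (\<lambda>\<omega>. \<Sum>i<n. a i * \<omega> i)"
    by (rule ext, rule sum.mono_neutral_left) (auto simp: J_def)
  have "(\<Sum>i\<in>J. (\<bar>a i\<bar> * \<sigma>)\<^sup>2) = \<sigma>\<^sup>2 * (\<Sum>i\<in>J. (a i)\<^sup>2)"
    by (simp add: sum_distrib_left power_mult_distrib mult.commute)
  also have "(\<Sum>i\<in>J. (a i)\<^sup>2) = (\<Sum>i<n. (a i)\<^sup>2)"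
    by (rule sum.mono_neutral_left) (auto simp: J_def)
  finally have e2: "sqrt (\<Sum>i\<in>J. (\<bar>a i\<bar> * \<sigma>)\<^sup>2) = \<sigma> * sqrt (\<Sum>i<n. (a i)\<^sup>2)"
    using sig by (simp add: real_sqrt_mult)
  show ?thesis using D unfolding e1 e2 .
qed

lemma normal_tail:
  assumes M: "prob_space M" and D: "distributed M lborel Z (normal_density 0 s)"
    and s: "s > 0" and T: "T > 0"
  shows "measure M {\<omega> \<in> space M. Z \<omega> > T} \<le> s / (T * sqrt (2 * pi)) * exp (- (T\<^sup>2) / (2 * s\<^sup>2))"
proof -
  interpret prob_space M by fact
  define F where "F = (\<lambda>x. - (s\<^sup>2 / T) * normal_density 0 s x)"
  have set: "{\<omega> \<in> space M. Z \<omega> > T} = Z -` {T<..} \<inter> space M" by auto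
  have "emeasure M {\<omega> \<in> space M. Z \<omega> > T} = (\<integral>\<^sup>+x. ennreal (normal_density 0 s x) * indicator {T<..} x \<partial>lborel)"
    unfolding set by (rule distributed_emeasure[OF D]) simp
  also have "\<dots> \<le> (\<integral>\<^sup>+x. ennreal (x / T * normal_density 0 s x) * indicator {T..} x \<partial>lborel)"
  proof (rule nn_integral_mono)
    fix x :: real
    show "ennreal (normal_density 0 s x) * indicator {T<..} x \<le> ennreal (x / T * normal_density 0 s x) * indicator {T..} x"
    proof (cases "T < x")
      case True
      then have "normal_density 0 s x \<le> x / T * normal_density 0 s x"
        using T mult_right_mono[of 1 "x / T" "normal_density 0 s x"] by simp
      then show ?thesis using True by (auto simp: indicator_def intro: ennreal_leI)
    next
      case False
      then show ?thesis by (simp add: indicator_def)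
    qed
  qed
  also have "\<dots> = ennreal (0 - F T)"
  proof (rule nn_integral_FTC_atLeast)
    show "(\<lambda>x. x / T * normal_density 0 s x) \<in> borel_measurable borel" by measurable
    show "\<And>x. T \<le> x \<Longrightarrow> DERIV F x :> x / T * normal_density 0 s x"
      unfolding F_def normal_density_def using s T
      by (auto intro!: derivative_eq_intros simp: field_simps power2_eq_square)
    show "\<And>x. T \<le> x \<Longrightarrow> 0 \<le> x / T * normal_density 0 s x" using T by simp
    show "(F \<longlongrightarrow> 0) at_top" unfolding F_def normal_density_def using s by real_asymp
  qed
  also have "0 - F T = s / (T * sqrt (2 * pi)) * exp (- (T\<^sup>2) / (2 * s\<^sup>2))"
    unfolding F_def normal_density_def using s T
    by (simp add: real_sqrt_mult field_simps power2_eq_square)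
  finally have "ennreal (measure M {\<omega> \<in> space M. Z \<omega> > T}) \<le> ennreal (s / (T * sqrt (2 * pi)) * exp (- (T\<^sup>2) / (2 * s\<^sup>2)))"
    by (simp add: emeasure_eq_measure)
  moreover have "0 \<le> s / (T * sqrt (2 * pi)) * exp (- (T\<^sup>2) / (2 * s\<^sup>2))" using s T by simp
  ultimately show ?thesis using ennreal_le_iff by blast
qed

lemma bad_bound:
  fixes n :: nat and a :: "nat \<Rightarrow> real"
  assumes sig: "\<sigma>2 > 0" and nz: "\<exists>i<n. a i \<noteq> 0" and w: "w \<ge> 1"
  shows "measure (noise_measure n \<sigma>2) {\<omega> \<in> space (noise_measure n \<sigma>2).
      \<sigma>2 * (\<Sum>i<n. (a i)\<^sup>2) * w < (\<Sum>i<n. a i * \<omega> i)\<^sup>2} \<le> exp (- w / 2)"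
proof -
  define \<sigma> where "\<sigma> = sqrt \<sigma>2"
  have sp: "\<sigma> > 0" using sig by (simp add: \<sigma>_def)
  let ?P = "noise_measure n \<sigma>2"
  have P: "?P = PiM {..<n} (\<lambda>_. density lborel (normal_density 0 \<sigma>))"
    by (simp add: noise_measure_def \<sigma>_def)
  interpret P: prob_space ?P unfolding P using sp
    by (intro prob_space_PiM prob_space_normal_density) auto
  define Q where "Q = (\<Sum>i<n. (a i)\<^sup>2)"
  have Qpos: "Q > 0" unfolding Q_def using nz
    by (metis (no_types, lifting) finite_lessThan lessThan_iff power2_less_eq_zero_iff sum_pos2 zero_le_power2 not_less)
  define s where "s = \<sigma> * sqrt Q"
  have spos: "s > 0" using sp Qpos by (simp add: s_def)
  define T where "T = s * sqrt w"
  have Tpos: "T > 0" using spos w by (simp add: T_def)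
  have D1: "distributed ?P lborel (\<lambda>\<omega>. \<Sum>i<n. a i * \<omega> i) (normal_density 0 s)"
    unfolding P s_def Q_def by (rule lincomb_distributed[OF sp nz])
  have nz2: "\<exists>i<n. - a i \<noteq> 0" using nz by simp
  have D2: "distributed ?P lborel (\<lambda>\<omega>. \<Sum>i<n. - a i * \<omega> i) (normal_density 0 s)"
    unfolding P s_def Q_def using lincomb_distributed[OF sp nz2] by simp
  have tail: "s / (T * sqrt (2 * pi)) * exp (- (T\<^sup>2) / (2 * s\<^sup>2)) = exp (- w / 2) / (sqrt w * sqrt (2 * pi))"
    using spos w by (simp add: T_def power_mult_distrib field_simps)
  have pi4: "sqrt (2 * pi) \<ge> 2"
  proof -
    have "sqrt 4 \<le> sqrt (2 * pi)" using pi_gt3 by (intro real_sqrt_le_mono) simp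
    moreover have "sqrt (4::real) = 2" using real_sqrt_abs[of 2] by simp
    ultimately show ?thesis by simp
  qed
  have sw: "sqrt w \<ge> 1" using w by simp
  have prodge: "sqrt w * sqrt (2 * pi) \<ge> 2" using pi4 sw
    by (metis mult_mono mult_1 dual_order.trans less_eq_real_def order.refl zero_le_one zero_le_numeral)
  have B1: "measure ?P {\<omega> \<in> space ?P. (\<Sum>i<n. a i * \<omega> i) > T} \<le> exp (- w / 2) / (sqrt w * sqrt (2 * pi))"
    using normal_tail[OF P.prob_space_axioms D1 spos Tpos] tail by simp
  have B2: "measure ?P {\<omega> \<in> space ?P. (\<Sum>i<n. - a i * \<omega> i) > T} \<le> exp (- w / 2) / (sqrt w * sqrt (2 * pi))"
    using normal_tail[OF P.prob_space_axioms D2 spos Tpos] tail by simp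
  have TT: "T\<^sup>2 = \<sigma>2 * Q * w" using sig w Qpos by (simp add: T_def s_def \<sigma>_def power_mult_distrib)
  have seteq: "{\<omega> \<in> space ?P. \<sigma>2 * (\<Sum>i<n. (a i)\<^sup>2) * w < (\<Sum>i<n. a i * \<omega> i)\<^sup>2}
     = {\<omega> \<in> space ?P. (\<Sum>i<n. a i * \<omega> i) > T} \<union> {\<omega> \<in> space ?P. (\<Sum>i<n. - a i * \<omega> i) > T}"
  proof -
    have "(T\<^sup>2 < x\<^sup>2) = (T < x \<or> T < - x)" for x
    proof -
      have "(T\<^sup>2 < x\<^sup>2) = (\<bar>T\<bar> < \<bar>x\<bar>)" by (metis abs_le_square_iff not_le)
      then show ?thesis using Tpos by auto
    qed
    moreover have "\<And>\<omega>. (\<Sum>i<n. - a i * \<omega> i) = - (\<Sum>i<n. a i * \<omega> i)"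
      by (simp add: sum_negf)
    ultimately show ?thesis unfolding Q_def[symmetric] TT[symmetric] by auto
  qed
  have m1: "{\<omega> \<in> space ?P. (\<Sum>i<n. a i * \<omega> i) > T} \<in> P.events"
    unfolding P by measurable
  have m2: "{\<omega> \<in> space ?P. (\<Sum>i<n. - a i * \<omega> i) > T} \<in> P.events"
    unfolding P by measurable
  have "measure ?P {\<omega> \<in> space ?P. \<sigma>2 * (\<Sum>i<n. (a i)\<^sup>2) * w < (\<Sum>i<n. a i * \<omega> i)\<^sup>2}
      \<le> measure ?P {\<omega> \<in> space ?P. (\<Sum>i<n. a i * \<omega> i) > T} + measure ?P {\<omega> \<in> space ?P. (\<Sum>i<n. - a i * \<omega> i) > T}"
    unfolding seteq by (rule measure_subadditive[OF m1 m2]) (simp_all add: P.emeasure_eq_measure)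
  also have "\<dots> \<le> 2 * (exp (- w / 2) / (sqrt w * sqrt (2 * pi)))" using B1 B2 by simp
  also have "\<dots> \<le> exp (- w / 2)"
  proof -
    have "2 / (sqrt w * sqrt (2 * pi)) \<le> 1" using prodge by simp
    then have "exp (- w / 2) * (2 / (sqrt w * sqrt (2 * pi))) \<le> exp (- w / 2) * 1"
      by (intro mult_left_mono) auto
    then show ?thesis by (simp add: mult.commute)
  qed
  finally show ?thesis .
qed

lemma gamma_tilde_ne0_iff':
  assumes q: "sqnorm (col X j) > 0" and sig: "\<sigma>2 > 0" and z: "z \<ge> 0"
  shows "gamma_tilde \<sigma>2 z X Y j \<noteq> 0 \<longleftrightarrow> \<sigma>2 * sqnorm (col X j) * (1 + z) < (ipv (col X j) Y)\<^sup>2"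
proof -
  define Q where "Q = sqnorm (col X j)"
  define h where "h = ipv (col X j) Y"
  have Q: "Q > 0" using q by (simp add: Q_def)
  have e: "(\<sigma>2 * z / Q < (h\<^sup>2 - \<sigma>2 * Q) / Q\<^sup>2) \<longleftrightarrow> \<sigma>2 * z * Q < h\<^sup>2 - \<sigma>2 * Q"
    using Q by (simp add: field_simps power2_eq_square)
  have "\<sigma>2 * Q * z \<ge> 0" using Q sig z by simp
  then have "(\<sigma>2 * Q < h\<^sup>2 \<and> \<sigma>2 * z / Q < (h\<^sup>2 - \<sigma>2 * Q) / Q\<^sup>2) \<longleftrightarrow> \<sigma>2 * Q * (1 + z) < h\<^sup>2"
    unfolding e by (auto simp: algebra_simps)
  then show ?thesis using gamma_tilde_ne0_iff[OF q sig] by (simp add: Q_def h_def)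
qed

lemma sign_iff:
  assumes X: "X \<in> carrier_mat n p" and Y: "Y \<in> carrier_vec n" and sig: "\<sigma>2 > 0"
    and nz: "\<forall>j<p. col X j \<noteq> 0\<^sub>v n"
    and orth: "\<forall>j<p. \<forall>k<p. j \<noteq> k \<longrightarrow> ipv (col X j) (col X k) = 0"
    and z: "z \<ge> 0" and beta: "\<beta> \<in> carrier_vec p"
  shows "(sign_vec (sbl_estimator \<sigma>2 z X Y) = sign_vec \<beta>) \<longleftrightarrow>
    (\<forall>j<p. (if \<sigma>2 * sqnorm (col X j) * (1 + z) < (ipv (col X j) Y)\<^sup>2 then sgn (ipv (col X j) Y) else 0) = sgn (\<beta> $ j))"
proof -
  have ent: "sgn (sbl_estimator \<sigma>2 z X Y $ j) =
     (if \<sigma>2 * sqnorm (col X j) * (1 + z) < (ipv (col X j) Y)\<^sup>2 then sgn (ipv (col X j) Y) else 0)" if j: "j < p" for j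
  proof -
    have q: "sqnorm (col X j) > 0" using sqnorm_col_pos[OF X j] nz j by auto
    define g where "g = gamma_tilde \<sigma>2 z X Y j"
    define h where "h = ipv (col X j) Y"
    have g0: "g \<ge> 0" unfolding g_def by (rule gamma_tilde_nonneg[OF q sig])
    have est: "sbl_estimator \<sigma>2 z X Y $ j = (if g \<noteq> 0 then h / (sqnorm (col X j) + \<sigma>2 / g) else 0)"
      using sbl_formula[OF X Y sig nz orth, of z] j by (simp add: g_def h_def)
    show ?thesis
    proof (cases "g \<noteq> 0")
      case True
      then have gp: "g > 0" using g0 by simp
      have dp: "sqnorm (col X j) + \<sigma>2 / g > 0" using q sig gp by (simp add: add_pos_pos)
      have "sgn (h / (sqnorm (col X j) + \<sigma>2 / g)) = sgn h"
        using dp by (cases "h > 0"; cases "h < 0") (auto simp: sgn_real_def divide_neg_pos zero_less_divide_iff)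
      then show ?thesis using True est gamma_tilde_ne0_iff'[OF q sig z, of Y] by (simp add: g_def h_def)
    next
      case False
      then show ?thesis using est gamma_tilde_ne0_iff'[OF q sig z, of Y] by (simp add: g_def h_def)
    qed
  qed
  have dimE: "dim_vec (sbl_estimator \<sigma>2 z X Y) = p" using sbl_formula[OF X Y sig nz orth, of z] by simp
  have dimB: "dim_vec \<beta> = p" using beta by simp
  show ?thesis
  proof
    assume H: "sign_vec (sbl_estimator \<sigma>2 z X Y) = sign_vec \<beta>"
    show "\<forall>j<p. (if \<sigma>2 * sqnorm (col X j) * (1 + z) < (ipv (col X j) Y)\<^sup>2 then sgn (ipv (col X j) Y) else 0) = sgn (\<beta> $ j)"
    proof (intro allI impI)
      fix j assume j: "j < p"
      have "sign_vec (sbl_estimator \<sigma>2 z X Y) $ j = sign_vec \<beta> $ j" using H by simp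
      then show "(if \<sigma>2 * sqnorm (col X j) * (1 + z) < (ipv (col X j) Y)\<^sup>2 then sgn (ipv (col X j) Y) else 0) = sgn (\<beta> $ j)"
        using ent[OF j] j dimE dimB by (simp add: sign_vec_def)
    qed
  next
    assume H: "\<forall>j<p. (if \<sigma>2 * sqnorm (col X j) * (1 + z) < (ipv (col X j) Y)\<^sup>2 then sgn (ipv (col X j) Y) else 0) = sgn (\<beta> $ j)"
    show "sign_vec (sbl_estimator \<sigma>2 z X Y) = sign_vec \<beta>"
      by (rule eq_vecI) (use H ent dimE dimB in \<open>auto simp: sign_vec_def\<close>)
  qed
qed

lemma ipv_Xbeta:
  assumes X: "X \<in> carrier_mat n p" and beta: "\<beta> \<in> carrier_vec p"
    and orth: "\<forall>j<p. \<forall>k<p. j \<noteq> k \<longrightarrow> ipv (col X j) (col X k) = 0" and j: "j < p"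
  shows "ipv (col X j) (X *\<^sub>v \<beta>) = sqnorm (col X j) * \<beta> $ j"
proof -
  have "ipv (col X j) (X *\<^sub>v \<beta>) = (\<Sum>i<n. X $$ (i, j) * (\<Sum>k<p. X $$ (i, k) * \<beta> $ k))"
    using X beta j by (simp add: ipv_def scalar_prod_def atLeast0LessThan)
  also have "\<dots> = (\<Sum>k<p. \<beta> $ k * (\<Sum>i<n. X $$ (i, j) * X $$ (i, k)))"
    by (simp add: sum_distrib_left sum_distrib_right sum.swap[of _ "{..<n}"] ac_simps)
  also have "\<dots> = (\<Sum>k<p. \<beta> $ k * ipv (col X j) (col X k))"
    using X j by (intro sum.cong) (auto simp: ipv_def)
  also have "\<dots> = (\<Sum>k<p. if k = j then \<beta> $ j * sqnorm (col X j) else 0)"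
    using orth j by (intro sum.cong) (auto simp: sqnorm_def)
  also have "\<dots> = sqnorm (col X j) * \<beta> $ j" using j by simp
  finally show ?thesis .
qed



lemma sig_arith:
  fixes u g R :: real
  assumes u: "4 * R < u\<^sup>2" and g: "g\<^sup>2 \<le> R" and R: "0 \<le> R"
  shows "R < (u + g)\<^sup>2 \<and> sgn (u + g) = sgn u"
proof -
  define r where "r = sqrt R"
  have r0: "r \<ge> 0" and rR: "r\<^sup>2 = R" using R by (auto simp: r_def)
  have ag: "\<bar>g\<bar> \<le> r" unfolding r_def using g by (metis real_sqrt_abs real_sqrt_le_mono)
  have "sqrt (4 * R) < \<bar>u\<bar>" using u by (metis real_sqrt_abs real_sqrt_less_mono)
  moreover have "sqrt (4 * R) = 2 * r" by (simp add: r_def real_sqrt_mult)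
  ultimately have au: "2 * r < \<bar>u\<bar>" by simp
  have "r < \<bar>u + g\<bar>" using ag au by linarith
  then have "r\<^sup>2 < \<bar>u + g\<bar>\<^sup>2" using r0 by (intro power_strict_mono) auto
  then have A: "R < (u + g)\<^sup>2" using rR by simp
  have B: "sgn (u + g) = sgn u"
  proof (cases "u > 0")
    case True
    then have "u + g > 0" using ag au r0 by linarith
    then show ?thesis using True by simp
  next
    case False
    then have "u < 0" using au r0 by linarith
    moreover have "u + g < 0" using ag au r0 False by linarith
    ultimately show ?thesis by simp
  qed
  show ?thesis using A B by simp
qed

theorem corollary1:
  fixes n p :: nat and X :: "real mat" and \<beta> :: "real Matrix.vec" and \<sigma>2 c0 :: real
    and s :: nat and z c M :: real
  assumes X_dim: "X \<in> carrier_mat n p"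
    and beta_dim: "\<beta> \<in> carrier_vec p"
    and sigma_pos: "\<sigma>2 > 0"
    and cols_nonzero: "\<forall>j<p. col X j \<noteq> 0\<^sub>v n"
    and cols_orth: "\<forall>j<p. \<forall>k<p. j \<noteq> k \<longrightarrow> ipv (col X j) (col X k) = 0"
    and s_def: "s = card {j. j < p \<and> \<beta> $ j \<noteq> 0}"
    and log_s: "ln (real s) \<ge> 1"
    and c0: "c0 > 2"
    and z_def: "z = c0 * ln (real p)"
    and c_def: "c = Min ((\<lambda>j. sqnorm (col X j) / real n) ` {..<p})"
    and M_def: "M = 4 * (2 + c0) / c"
    and beta_min: "Min ((\<lambda>j. \<bar>\<beta> $ j\<bar>) ` {j. j < p \<and> \<beta> $ j \<noteq> 0})
                     > sqrt (M * \<sigma>2 * real s * ln (real p) / real n)"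
  shows "measure (noise_measure n \<sigma>2)
           {\<epsilon> \<in> space (noise_measure n \<sigma>2).
              sign_vec (sbl_estimator \<sigma>2 z X (X *\<^sub>v \<beta> + Matrix.vec n \<epsilon>)) = sign_vec \<beta>}
         \<ge> 1 - real p powr (- (c0 * real s / 8)) - exp (- real s) - real p powr (- (c0 / 2 - 1))"
proof -
  define P where "P = noise_measure n \<sigma>2"
  define \<sigma> where "\<sigma> = sqrt \<sigma>2"
  have sp: "\<sigma> > 0" using sigma_pos by (simp add: \<sigma>_def)
  have Peq: "P = PiM {..<n} (\<lambda>_. density lborel (normal_density 0 \<sigma>))"
    by (simp add: P_def noise_measure_def \<sigma>_def)
  interpret P: prob_space P unfolding Peq using sp
    by (intro prob_space_PiM prob_space_normal_density) auto
  define S where "S = {j. j < p \<and> \<beta> $ j \<noteq> 0}"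
  have finS: "finite S" by (rule finite_subset[of _ "{..<p}"]) (auto simp: S_def)
  have s_le_p: "s \<le> p" unfolding s_def
    using card_mono[of "{..<p}" "{j. j < p \<and> \<beta> $ j \<noteq> 0}"] by auto
  have s_pos: "s \<ge> 1"
  proof (rule ccontr)
    assume "\<not> s \<ge> 1" then have "s = 0" by simp
    then show False using log_s by simp
  qed
  have lnp: "ln (real p) \<ge> 1"
  proof -
    have "ln (real s) \<le> ln (real p)" using s_le_p s_pos by simp
    then show ?thesis using log_s by simp
  qed
  have p_pos: "p > 0" using s_le_p s_pos by simp
  have zpos: "z > 0" using c0 lnp z_def by simp
  have n_pos: "n > 0"
  proof (rule ccontr)
    assume "\<not> n > 0" then have n0: "n = 0" by simp
    have "col X 0 = 0\<^sub>v n" using X_dim p_pos n0 by (intro eq_vecI) auto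
    then show False using cols_nonzero p_pos by auto
  qed
  define q where "q j = sqnorm (col X j)" for j
  have qpos: "\<And>j. j < p \<Longrightarrow> q j > 0" unfolding q_def using sqnorm_col_pos[OF X_dim] cols_nonzero by auto
  have qsum: "\<And>j. j < p \<Longrightarrow> q j = (\<Sum>i<n. (X $$ (i, j))\<^sup>2)"
    using X_dim by (simp add: q_def sqnorm_def ipv_def power2_eq_square)
  have c_le: "\<And>j. j < p \<Longrightarrow> c \<le> q j / real n" unfolding c_def q_def by (intro Min_le) auto
  have c_pos: "c > 0" unfolding c_def using p_pos n_pos qpos
    by (subst Min_gr_iff) (auto simp: q_def)
  have M_pos: "M > 0" using c_pos c0 by (simp add: M_def)
  have signal: "4 * (\<sigma>2 * q j * (1 + z)) < (q j * \<beta> $ j)\<^sup>2" if j: "j < p" "\<beta> $ j \<noteq> 0" for j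
  proof -
    define K where "K = M * \<sigma>2 * real s * ln (real p) / real n"
    have K0: "K \<ge> 0" using M_pos sigma_pos lnp by (simp add: K_def)
    have jS: "j \<in> S" using j by (simp add: S_def)
    have "Min ((\<lambda>j. \<bar>\<beta> $ j\<bar>) ` S) \<le> \<bar>\<beta> $ j\<bar>" using finS jS by (intro Min_le) auto
    then have "sqrt K < \<bar>\<beta> $ j\<bar>" using beta_min by (simp add: K_def S_def)
    then have "(sqrt K)\<^sup>2 < \<bar>\<beta> $ j\<bar>\<^sup>2" using K0 by (intro power_strict_mono) auto
    then have bK: "K < (\<beta> $ j)\<^sup>2" using K0 by simp
    have "c * real n \<le> q j" using c_le[OF j(1)] n_pos by (simp add: field_simps)
    then have "c * real n * (\<beta> $ j)\<^sup>2 \<le> q j * (\<beta> $ j)\<^sup>2" by (intro mult_right_mono) auto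
    moreover have "c * real n * K < c * real n * (\<beta> $ j)\<^sup>2" using bK c_pos n_pos by simp
    moreover have "c * real n * K = 4 * (2 + c0) * \<sigma>2 * real s * ln (real p)"
      using c_pos n_pos by (simp add: K_def M_def field_simps)
    ultimately have qb: "4 * (2 + c0) * \<sigma>2 * real s * ln (real p) < q j * (\<beta> $ j)\<^sup>2" by linarith
    have "1 + z \<le> (2 + c0) * real s * ln (real p)"
    proof -
      have s1: "real s \<ge> 1" using s_pos by simp
      have "real s * ln (real p) \<ge> 1 * 1" using s1 lnp
        by (intro mult_mono) auto
      moreover have "1 * ln (real p) \<le> real s * ln (real p)" using s1 lnp
        by (intro mult_right_mono) auto
      then have "c0 * ln (real p) \<le> c0 * (real s * ln (real p))"
        using c0 by (intro mult_left_mono) auto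
      ultimately show ?thesis using z_def by (simp add: algebra_simps)
    qed
    then have "(4 * \<sigma>2) * (1 + z) \<le> (4 * \<sigma>2) * ((2 + c0) * real s * ln (real p))"
      using sigma_pos by (intro mult_left_mono) auto
    then have "4 * (\<sigma>2 * (1 + z)) \<le> 4 * (2 + c0) * \<sigma>2 * real s * ln (real p)"
      by (simp add: ac_simps)
    with qb have "4 * (\<sigma>2 * (1 + z)) < q j * (\<beta> $ j)\<^sup>2" by linarith
    then have "q j * (4 * (\<sigma>2 * (1 + z))) < q j * (q j * (\<beta> $ j)\<^sup>2)"
      using qpos[OF j(1)] by simp
    then show ?thesis by (simp add: power2_eq_square algebra_simps)
  qed
  define g where "g j \<omega> = (\<Sum>i<n. X $$ (i, j) * \<omega> i)" for j \<omega>
  define Yf where "Yf \<omega> = X *\<^sub>v \<beta> + Matrix.vec n \<omega>" for \<omega>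
  have Yf_car: "\<And>\<omega>. Yf \<omega> \<in> carrier_vec n" using X_dim beta_dim by (simp add: Yf_def)
  have h_eq: "ipv (col X j) (Yf \<omega>) = q j * \<beta> $ j + g j \<omega>" if j: "j < p" for j \<omega>
  proof -
    have "ipv (col X j) (Yf \<omega>) = (\<Sum>i<n. X $$ (i, j) * (X *\<^sub>v \<beta>) $ i) + g j \<omega>"
      using X_dim j by (simp add: ipv_def Yf_def g_def distrib_left sum.distrib)
    also have "(\<Sum>i<n. X $$ (i, j) * (X *\<^sub>v \<beta>) $ i) = ipv (col X j) (X *\<^sub>v \<beta>)"
      using X_dim j by (simp add: ipv_def)
    also have "\<dots> = q j * \<beta> $ j" unfolding q_def by (rule ipv_Xbeta[OF X_dim beta_dim cols_orth j])
    finally show ?thesis .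
  qed
  define \<Phi> where "\<Phi> j r = (if \<sigma>2 * q j * (1 + z) < r\<^sup>2 then sgn r else 0)" for j r
  define Tg where "Tg = {\<epsilon> \<in> space P. \<forall>j<p. \<Phi> j (q j * \<beta> $ j + g j \<epsilon>) = sgn (\<beta> $ j)}"
  have target_eq: "{\<epsilon> \<in> space P. sign_vec (sbl_estimator \<sigma>2 z X (X *\<^sub>v \<beta> + Matrix.vec n \<epsilon>)) = sign_vec \<beta>} = Tg"
  proof -
    have "sign_vec (sbl_estimator \<sigma>2 z X (Yf \<epsilon>)) = sign_vec \<beta> \<longleftrightarrow>
        (\<forall>j<p. \<Phi> j (q j * \<beta> $ j + g j \<epsilon>) = sgn (\<beta> $ j))" for \<epsilon>
      unfolding sign_iff[OF X_dim Yf_car sigma_pos cols_nonzero cols_orth less_imp_le[OF zpos] beta_dim]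
      using h_eq by (simp add: \<Phi>_def q_def)
    then show ?thesis by (auto simp: Tg_def Yf_def)
  qed
  have Tg_meas: "Tg \<in> P.events" unfolding Tg_def Peq g_def \<Phi>_def by measurable
  define G where "G = {\<epsilon> \<in> space P. \<forall>j<p. (g j \<epsilon>)\<^sup>2 \<le> \<sigma>2 * q j * (1 + z)}"
  have G_meas: "G \<in> P.events" unfolding G_def Peq g_def by measurable
  have G_sub: "G \<subseteq> Tg"
  proof
    fix \<epsilon> assume e: "\<epsilon> \<in> G"
    have "\<Phi> j (q j * \<beta> $ j + g j \<epsilon>) = sgn (\<beta> $ j)" if j: "j < p" for j
    proof (cases "\<beta> $ j = 0")
      case True
      then show ?thesis using e j by (auto simp: \<Phi>_def G_def not_less)
    next
      case False
      have R0: "0 \<le> \<sigma>2 * q j * (1 + z)" using sigma_pos qpos[OF j] zpos by simp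
      have gb: "(g j \<epsilon>)\<^sup>2 \<le> \<sigma>2 * q j * (1 + z)" using e j by (auto simp: G_def)
      from sig_arith[OF signal[OF j False] gb R0]
      have "\<sigma>2 * q j * (1 + z) < (q j * \<beta> $ j + g j \<epsilon>)\<^sup>2"
           "sgn (q j * \<beta> $ j + g j \<epsilon>) = sgn (q j * \<beta> $ j)" by auto
      moreover have "sgn (q j * \<beta> $ j) = sgn (\<beta> $ j)" using qpos[OF j] by (simp add: sgn_mult)
      ultimately show ?thesis by (simp add: \<Phi>_def)
    qed
    then show "\<epsilon> \<in> Tg" using e by (auto simp: Tg_def G_def)
  qed
  define bad where "bad j = {\<epsilon> \<in> space P. \<sigma>2 * q j * (1 + z) < (g j \<epsilon>)\<^sup>2}" for j
  have bad_meas: "\<And>j. bad j \<in> P.events" unfolding bad_def Peq g_def by measurable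
  have compl: "space P - G = (\<Union>j<p. bad j)" by (auto simp: G_def bad_def not_le)
  have bad_le: "measure P (bad j) \<le> exp (- (1 + z) / 2)" if j: "j < p" for j
  proof -
    have nzj: "\<exists>i<n. X $$ (i, j) \<noteq> 0"
    proof (rule ccontr)
      assume "\<not> (\<exists>i<n. X $$ (i, j) \<noteq> 0)"
      then have "col X j = 0\<^sub>v n" using X_dim j by (intro eq_vecI) auto
      then show False using cols_nonzero j by auto
    qed
    have "bad j = {\<omega> \<in> space (noise_measure n \<sigma>2).
      \<sigma>2 * (\<Sum>i<n. (X $$ (i, j))\<^sup>2) * (1 + z) < (\<Sum>i<n. X $$ (i, j) * \<omega> i)\<^sup>2}"
      by (simp add: bad_def P_def g_def qsum[OF j])
    then show ?thesis using bad_bound[OF sigma_pos nzj, of "1 + z"] zpos by (simp add: P_def)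
  qed
  have "measure P (\<Union>j<p. bad j) \<le> (\<Sum>j<p. measure P (bad j))"
    using bad_meas by (intro P.finite_measure_subadditive_finite) auto
  also have "\<dots> \<le> (\<Sum>j<p. exp (- (1 + z) / 2))" by (intro sum_mono bad_le) auto
  also have "\<dots> = real p * exp (- (1 + z) / 2)" by simp
  also have "\<dots> \<le> real p * exp (- z / 2)" by (intro mult_left_mono) auto
  also have "\<dots> = real p powr (- (c0 / 2 - 1))"
  proof -
    have "exp (- z / 2) = real p powr (- c0 / 2)" using p_pos by (simp add: powr_def z_def)
    then have "real p * exp (- z / 2) = real p powr 1 * real p powr (- c0 / 2)" using p_pos by simp
    also have "\<dots> = real p powr (1 + (- c0 / 2))" by (rule powr_add[symmetric])
    also have "1 + (- c0 / 2) = - (c0 / 2 - 1)" by simp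
    finally show ?thesis .
  qed
  finally have ub: "measure P (space P - G) \<le> real p powr (- (c0 / 2 - 1))" unfolding compl .
  have "measure P G = 1 - measure P (space P - G)" using P.prob_compl[OF G_meas] by simp
  then have "measure P Tg \<ge> 1 - real p powr (- (c0 / 2 - 1))"
    using P.finite_measure_mono[OF G_sub Tg_meas] ub by linarith
  moreover have "real p powr (- (c0 * real s / 8)) \<ge> 0" "exp (- real s) \<ge> 0" by auto
  ultimately have "measure P Tg \<ge> 1 - real p powr (- (c0 * real s / 8)) - exp (- real s) - real p powr (- (c0 / 2 - 1))"
    by linarith
  then show ?thesis using target_eq by (simp add: P_def[symmetric])
qed

end
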